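(* Let $n\ge 4$ and let $k$ be a positive integer. Then $|U(n,2)|=\frac12 C_{4k}^{2k}C_{4k^2}^{k}$ if $n=4k$; $|U(n,2)|=C_{4k+1}^{2k}C_{4k^2+2k}^{k}$ if $n=4k+1$; and $|U(n,2)|=0$ if $n$ is not of the form $4k$ or $4k+1$.
   Context: Let $S=K[x_1,\ldots,x_n]$ over a field $K$; $C_a^b$ is the binomial coefficient; $sm(S)_d$ is the set of square-free monomials of degree $d$. For a set $A$ of square-free monomials, $\sqcup(A)=\{gx_i\mid g\in A,\ x_i\nmid g\}$, $\sqcap(A)=\{h\ne1\mid h=g/x_i,\ g\in A,\ x_i\mid g\}$; $A\subseteq sm(S)_d$ is $(n,d)^{th}$ perfect if $\sqcup(A)=sm(S)_{d+1}$ and $\sqcap(A)=sm(S)_{d-1}$; $N_{(n,d)}$ is the least cardinality of an $(n,d)^{th}$ perfect set. With $\sigma$ the bijection from square-free monomials to subsets of $[n]$, the facet complex $\delta_{\mathcal{F}}(I)$ of a square-free monomial ideal $I$ has facets $\sigma(g)$, $g\in G(I)$ (the minimal generating set), the Stanley–Reisner complex is $\delta_{\mathcal{N}}(I)=\{\sigma(g)\mid g\notin I\}$, and $I$ is an $f$-ideal if both complexes have the same $f$-vector. An ideal is of degree $d$ if all elements of $G(I)$ have degree $d$. $U(n,2)$ is the set of $f$-ideals $I$ of $S$ of degree $2$ such that $G(I)$ contains an $(n,2)^{th}$ perfect set of cardinality $N_{(n,2)}$. *)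

theory Defs
  imports Complex_Main "HOL-Library.Multiset"
begin

text \<open>Monomials of S = K[x_1,...,x_n] are modelled as multisets of variable
indices (the multiset of variables x_i, with multiplicity the exponent).
Multiplication of monomials is multiset sum, divisibility is sub-multiset.
A monomial ideal of S is determined by the set of monomials it contains.\<close>

type_synonym monomial = "nat multiset"

definition monoms :: "nat \<Rightarrow> monomial set" where
  "monoms n = {m. set_mset m \<subseteq> {1..n}}"

definition sqfree :: "monomial \<Rightarrow> bool" where
  "sqfree m \<longleftrightarrow> (\<forall>x. count m x \<le> 1)"

definition sm :: "nat \<Rightarrow> nat \<Rightarrow> monomial set" where
  "sm n d = {m \<in> monoms n. sqfree m \<and> size m = d}"

definition monomial_ideal :: "nat \<Rightarrow> monomial set \<Rightarrow> bool" where
  "monomial_ideal n I \<longleftrightarrow> I \<subseteq> monoms n \<and>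
     (\<forall>m\<in>I. \<forall>m'\<in>monoms n. m + m' \<in> I)"

definition gens :: "monomial set \<Rightarrow> monomial set" where
  "gens I = {m \<in> I. \<forall>m'\<in>I. m' \<subseteq># m \<longrightarrow> m' = m}"

definition sqfree_monomial_ideal :: "nat \<Rightarrow> monomial set \<Rightarrow> bool" where
  "sqfree_monomial_ideal n I \<longleftrightarrow> monomial_ideal n I \<and> (\<forall>g\<in>gens I. sqfree g)"

definition ideal_of_degree :: "monomial set \<Rightarrow> nat \<Rightarrow> bool" where
  "ideal_of_degree I d \<longleftrightarrow> (\<forall>g\<in>gens I. size g = d)"

definition \<sigma> :: "monomial \<Rightarrow> nat set" where
  "\<sigma> m = set_mset m"

definition facet_complex :: "monomial set \<Rightarrow> nat set set" where
  "facet_complex I = {F. \<exists>g\<in>gens I. F \<subseteq> \<sigma> g}"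

definition SR_complex :: "nat \<Rightarrow> monomial set \<Rightarrow> nat set set" where
  "SR_complex n I = {\<sigma> g | g. g \<in> monoms n \<and> sqfree g \<and> g \<notin> I}"

text \<open>f-vector: entry i counts faces with i vertices (i.e. of dimension i-1).\<close>
definition fvec :: "nat set set \<Rightarrow> nat \<Rightarrow> nat" where
  "fvec \<Delta> i = card {F \<in> \<Delta>. card F = i}"

definition f_ideal :: "nat \<Rightarrow> monomial set \<Rightarrow> bool" where
  "f_ideal n I \<longleftrightarrow> sqfree_monomial_ideal n I \<and>
     fvec (facet_complex I) = fvec (SR_complex n I)"

definition up :: "nat \<Rightarrow> monomial set \<Rightarrow> monomial set" where
  "up n A = {g + {#i#} | g i. g \<in> A \<and> i \<in> {1..n} \<and> i \<notin># g}"

definition down :: "monomial set \<Rightarrow> monomial set" where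
  "down A = {g - {#i#} | g i. g \<in> A \<and> i \<in># g \<and> g - {#i#} \<noteq> {#}}"

definition perfect :: "nat \<Rightarrow> nat \<Rightarrow> monomial set \<Rightarrow> bool" where
  "perfect n d A \<longleftrightarrow> A \<subseteq> sm n d \<and> up n A = sm n (d + 1) \<and> down A = sm n (d - 1)"

definition N :: "nat \<Rightarrow> nat \<Rightarrow> nat" where
  "N n d = (LEAST c. \<exists>A. perfect n d A \<and> card A = c)"

definition U :: "nat \<Rightarrow> monomial set set" where
  "U n = {I. f_ideal n I \<and> ideal_of_degree I 2 \<and>
            (\<exists>A. A \<subseteq> gens I \<and> perfect n 2 A \<and> card A = N n 2)}"

end

theory Submission
  imports Defs
begin


abbreviation ed :: "nat \<Rightarrow> nat \<Rightarrow> monomial" where "ed a b \<equiv> {#a, b#}"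

lemma ed_eq_iff: "ed a b = ed c d \<longleftrightarrow> (a = c \<and> b = d) \<or> (a = d \<and> b = c)"
  by (auto simp: add_eq_conv_ex)

lemma sqfree_set: "sqfree m \<Longrightarrow> mset_set (set_mset m) = m"
proof (rule multiset_eqI)
  fix x assume "sqfree m"
  then have "count m x \<le> 1" by (simp add: sqfree_def)
  then show "count (mset_set (set_mset m)) x = count m x"
  proof -
    show ?thesis
    proof (cases "x \<in># m")
      case True
      then have "count m x \<noteq> 0" by (simp add: count_eq_zero_iff)
      then have "count m x = 1" using \<open>count m x \<le> 1\<close> by linarith
      then show ?thesis using True by (simp add: count_mset_set')
    next
      case False
      then show ?thesis by (simp add: count_mset_set' count_eq_zero_iff)
    qed
  qed
qed

lemma sqfree_inj: "sqfree m \<Longrightarrow> sqfree m' \<Longrightarrow> \<sigma> m = \<sigma> m' \<Longrightarrow> m = m'"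
  unfolding \<sigma>_def by (metis sqfree_set)

lemma sqfree_mset_set: "finite S \<Longrightarrow> sqfree (mset_set S)"
  unfolding sqfree_def by (simp add: count_mset_set')

lemma sm2_iff: "m \<in> sm n 2 \<longleftrightarrow> (\<exists>a b. a \<in> {1..n} \<and> b \<in> {1..n} \<and> a \<noteq> b \<and> m = ed a b)"
proof
  assume m: "m \<in> sm n 2"
  then have "size m = Suc (Suc 0)" by (simp add: sm_def)
  then obtain a m1 where m1: "m = add_mset a m1" "size m1 = Suc 0"
    by (metis size_eq_Suc_imp_eq_union size_add_mset Suc_inject)
  then obtain b where "m1 = {#b#}" by (metis size_1_singleton_mset One_nat_def)
  with m1 have me: "m = ed a b" by simp
  have "a \<noteq> b" using m me by (auto simp: sm_def sqfree_def split: if_splits)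
  moreover have "a \<in> {1..n}" "b \<in> {1..n}" using m me by (auto simp: sm_def monoms_def)
  ultimately show "\<exists>a b. a \<in> {1..n} \<and> b \<in> {1..n} \<and> a \<noteq> b \<and> m = ed a b" using me by blast
next
  assume "\<exists>a b. a \<in> {1..n} \<and> b \<in> {1..n} \<and> a \<noteq> b \<and> m = ed a b"
  then show "m \<in> sm n 2" by (auto simp: sm_def monoms_def sqfree_def)
qed

lemma ed_in_sm2: "a \<in> {1..n} \<Longrightarrow> b \<in> {1..n} \<Longrightarrow> a \<noteq> b \<Longrightarrow> ed a b \<in> sm n 2"
  using sm2_iff by blast

lemma sm1_iff: "m \<in> sm n 1 \<longleftrightarrow> (\<exists>a. a \<in> {1..n} \<and> m = {#a#})"
proof
  assume "m \<in> sm n 1"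
  then have "size m = 1" "set_mset m \<subseteq> {1..n}" by (auto simp: sm_def monoms_def)
  then show "\<exists>a. a \<in> {1..n} \<and> m = {#a#}" by (metis size_1_singleton_mset insert_subset set_mset_add_mset_insert)
qed (auto simp: sm_def monoms_def sqfree_def)

lemma sm3_iff: "m \<in> sm n 3 \<longleftrightarrow> (\<exists>a b c. a \<in> {1..n} \<and> b \<in> {1..n} \<and> c \<in> {1..n} \<and> a \<noteq> b \<and> a \<noteq> c \<and> b \<noteq> c \<and> m = {#a, b, c#})"
proof
  assume m: "m \<in> sm n 3"
  then have "size m = Suc (Suc (Suc 0))" by (simp add: sm_def)
  then obtain a m1 where m1: "m = add_mset a m1" "size m1 = Suc (Suc 0)"
    by (metis size_eq_Suc_imp_eq_union size_add_mset Suc_inject)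
  then obtain b m2 where m2: "m1 = add_mset b m2" "size m2 = Suc 0"
    by (metis size_eq_Suc_imp_eq_union size_add_mset Suc_inject)
  then obtain c where "m2 = {#c#}" by (metis size_1_singleton_mset One_nat_def)
  with m1 m2 have me: "m = {#a, b, c#}" by simp
  have "a \<noteq> b \<and> a \<noteq> c \<and> b \<noteq> c" using m me by (auto simp: sm_def sqfree_def split: if_splits)
  moreover have "a \<in> {1..n}" "b \<in> {1..n}" "c \<in> {1..n}" using m me by (auto simp: sm_def monoms_def)
  ultimately show "\<exists>a b c. a \<in> {1..n} \<and> b \<in> {1..n} \<and> c \<in> {1..n} \<and> a \<noteq> b \<and> a \<noteq> c \<and> b \<noteq> c \<and> m = {#a, b, c#}" using me by blast
next
  assume "\<exists>a b c. a \<in> {1..n} \<and> b \<in> {1..n} \<and> c \<in> {1..n} \<and> a \<noteq> b \<and> a \<noteq> c \<and> b \<noteq> c \<and> m = {#a, b, c#}"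
  then show "m \<in> sm n 3" by (auto simp: sm_def monoms_def sqfree_def)
qed

lemma sub_triple:
  assumes "h + {#i#} = {#a, b, c#}"
  shows "h = ed a b \<or> h = ed a c \<or> h = ed b c"
proof -
  have "i \<in># {#a, b, c#}" unfolding assms[symmetric] by simp
  moreover have "h = {#a, b, c#} - {#i#}" using assms by (metis add_diff_cancel_right')
  ultimately show ?thesis by (auto simp: add_mset_commute)
qed



definition inside :: "nat \<Rightarrow> nat set \<Rightarrow> monomial set" where
  "inside n B = {ed a b | a b. a \<in> {1..n} \<and> b \<in> {1..n} \<and> a \<noteq> b \<and> (a \<in> B \<longleftrightarrow> b \<in> B)}"

definition cross :: "nat \<Rightarrow> nat set \<Rightarrow> monomial set" where
  "cross n B = {ed a b | a b. a \<in> B \<and> b \<in> {1..n} - B}"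

lemma sm2_finite: "finite (sm n 2)"
proof -
  have "sm n 2 \<subseteq> (\<lambda>(a,b). ed a b) ` ({1..n} \<times> {1..n})"
  proof
    fix m assume "m \<in> sm n 2"
    then obtain a b where "a \<in> {1..n}" "b \<in> {1..n}" "m = ed a b" by (auto simp: sm2_iff)
    then show "m \<in> (\<lambda>(a,b). ed a b) ` ({1..n} \<times> {1..n})" by force
  qed
  then show ?thesis by (rule finite_subset) simp
qed

lemma inside_sub: "inside n B \<subseteq> sm n 2"
  by (auto simp: inside_def intro: ed_in_sm2)

lemma cross_sub: "B \<subseteq> {1..n} \<Longrightarrow> cross n B \<subseteq> sm n 2"
  by (auto simp: cross_def intro!: ed_in_sm2)

lemma inside_cross_disj: "inside n B \<inter> cross n B = {}"
  by (auto simp: inside_def cross_def ed_eq_iff)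

lemma inside_cross_un: "B \<subseteq> {1..n} \<Longrightarrow> inside n B \<union> cross n B = sm n 2"
proof
  assume B: "B \<subseteq> {1..n}"
  show "inside n B \<union> cross n B \<subseteq> sm n 2" using inside_sub cross_sub[OF B] by blast
  show "sm n 2 \<subseteq> inside n B \<union> cross n B"
  proof
    fix m assume "m \<in> sm n 2"
    then obtain a b where ab: "a \<in> {1..n}" "b \<in> {1..n}" "a \<noteq> b" "m = ed a b" by (auto simp: sm2_iff)
    show "m \<in> inside n B \<union> cross n B"
    proof (cases "a \<in> B \<longleftrightarrow> b \<in> B")
      case True then show ?thesis using ab by (auto simp: inside_def)
    next
      case False
      then have "(a \<in> B \<and> b \<in> {1..n} - B) \<or> (b \<in> B \<and> a \<in> {1..n} - B)" using ab by auto
      then show ?thesis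
      proof
        assume "a \<in> B \<and> b \<in> {1..n} - B"
        then show ?thesis using ab unfolding cross_def by blast
      next
        assume "b \<in> B \<and> a \<in> {1..n} - B"
        moreover have "m = ed b a" using ab by (simp add: add_mset_commute)
        ultimately show ?thesis unfolding cross_def by blast
      qed
    qed
  qed
qed

lemma cross_eq: "B \<subseteq> {1..n} \<Longrightarrow> cross n B = sm n 2 - inside n B"
  using inside_cross_un inside_cross_disj by blast

lemma inside_eq: "B \<subseteq> {1..n} \<Longrightarrow> inside n B = sm n 2 - cross n B"
  using inside_cross_un inside_cross_disj by blast

lemma inside_compl: "inside n ({1..n} - B) = inside n B"
  unfolding inside_def by auto

lemma cross_compl: "B \<subseteq> {1..n} \<Longrightarrow> cross n ({1..n} - B) = cross n B"
  by (metis cross_eq inside_compl Diff_subset)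

lemma card_cross: assumes "B \<subseteq> {1..n}" shows "card (cross n B) = card B * (n - card B)"
proof -
  have "cross n B = (\<lambda>(a,b). ed a b) ` (B \<times> ({1..n} - B))"
    unfolding cross_def by force
  moreover have "inj_on (\<lambda>(a,b). ed a b) (B \<times> ({1..n} - B))"
    by (auto simp: inj_on_def ed_eq_iff)
  moreover have "finite B" using assms finite_subset by blast
  moreover have "card ({1..n} - B) = n - card B" 
  proof -
    have "finite B" using assms finite_subset by blast
    then have "card ({1..n} - B) = card {1..n} - card B" using assms by (rule card_Diff_subset)
    then show ?thesis by simp
  qed
  ultimately show ?thesis by (simp add: card_image card_cartesian_product)
qed

lemma card_sm2: "card (sm n 2) = n choose 2"
proof -
  have "\<sigma> ` sm n 2 = {S. S \<subseteq> {1..n} \<and> card S = 2}"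
  proof
    show "\<sigma> ` sm n 2 \<subseteq> {S. S \<subseteq> {1..n} \<and> card S = 2}"
      by (auto simp: sm2_iff \<sigma>_def)
    show "{S. S \<subseteq> {1..n} \<and> card S = 2} \<subseteq> \<sigma> ` sm n 2"
    proof
      fix S assume "S \<in> {S. S \<subseteq> {1..n} \<and> card S = 2}"
      then obtain a b where "S = {a, b}" "a \<noteq> b" "a \<in> {1..n}" "b \<in> {1..n}"
        by (auto simp: card_2_iff)
      then show "S \<in> \<sigma> ` sm n 2"
        by (intro image_eqI[of _ _ "ed a b"] ed_in_sm2) (auto simp: \<sigma>_def)
    qed
  qed
  moreover have "inj_on \<sigma> (sm n 2)"
    unfolding inj_on_def sm_def using sqfree_inj by blast
  ultimately have "card (sm n 2) = card {S. S \<subseteq> {1..n} \<and> card S = 2}"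
    by (metis (no_types, lifting) card_image)
  also have "\<dots> = card {1..n} choose 2" by (rule n_subsets) simp
  finally show ?thesis by simp
qed



lemma ed_sm2_iff: "ed a b \<in> sm n 2 \<longleftrightarrow> a \<in> {1..n} \<and> b \<in> {1..n} \<and> a \<noteq> b"
proof
  assume "ed a b \<in> sm n 2"
  then obtain c d where "c \<in> {1..n}" "d \<in> {1..n}" "c \<noteq> d" "ed a b = ed c d" by (auto simp: sm2_iff)
  then show "a \<in> {1..n} \<and> b \<in> {1..n} \<and> a \<noteq> b" by (auto simp: ed_eq_iff)
qed (auto intro: ed_in_sm2)

lemma qmax:
  fixes b n :: nat assumes "b \<le> n"
  shows "b * (n - b) \<le> n div 2 * (n - n div 2)"
    and "b * (n - b) = n div 2 * (n - n div 2) \<Longrightarrow> b = n div 2 \<or> b = n - n div 2"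
proof -
  define m where "m = n div 2"
  define r where "r = n mod 2"
  have n: "n = 2 * m + r" and r: "r \<le> 1" unfolding m_def r_def by auto
  have nm: "n - m = m + r" using n by simp
  have eq: "int (m * (n - m)) - int (b * (n - b)) = (int m - int b) * (int m - int b + int r)"
  proof -
    have 1: "int (b * (n - b)) = int b * (int n - int b)" using assms by (simp add: of_nat_diff)
    have 2: "int (m * (n - m)) = int m * (int m + int r)" using nm by simp
    have 3: "int n = 2 * int m + int r" using n by simp
    show ?thesis unfolding 1 2 3 by (simp add: algebra_simps)
  qed
  have nn: "(int m - int b) * (int m - int b + int r) \<ge> 0"
  proof (cases "int m - int b \<ge> 0")
    case True then show ?thesis by simp
  next
    case False
    then have "int m - int b + int r \<le> 0" using r by linarith
    then show ?thesis using False by (simp add: mult_nonpos_nonpos)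
  qed
  show "b * (n - b) \<le> n div 2 * (n - n div 2)"
    using eq nn unfolding m_def[symmetric] by linarith
  assume "b * (n - b) = n div 2 * (n - n div 2)"
  then have "(int m - int b) * (int m - int b + int r) = 0" using eq unfolding m_def[symmetric] by simp
  then have "int m - int b = 0 \<or> int m - int b + int r = 0" by simp
  then show "b = n div 2 \<or> b = n - n div 2" using nm unfolding m_def[symmetric] by auto
qed

lemma exists_other:
  assumes "finite S" "2 \<le> card S" shows "\<exists>b\<in>S. b \<noteq> a"
proof (rule ccontr)
  assume "\<not> (\<exists>b\<in>S. b \<noteq> a)"
  then have "S \<subseteq> {a}" by auto
  then have "card S \<le> card {a}" by (rule card_mono[rotated]) simp
  then have "card S \<le> 1" by simp
  then show False using assms by simp
qed

lemma perfect_inside: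
  assumes B: "B \<subseteq> {1..n}" and c1: "2 \<le> card B" and c2: "2 \<le> card ({1..n} - B)"
  shows "perfect n 2 (inside n B)"
  unfolding perfect_def
proof (intro conjI)
  show "inside n B \<subseteq> sm n 2" by (rule inside_sub)
  show "up n (inside n B) = sm n (2 + 1)"
  proof
    show "up n (inside n B) \<subseteq> sm n (2 + 1)"
    proof
      fix x assume "x \<in> up n (inside n B)"
      then obtain g i where x: "x = g + {#i#}" "g \<in> inside n B" "i \<in> {1..n}" "i \<notin># g"
        by (auto simp: up_def)
      then obtain a b where g: "g = ed a b" "a \<in> {1..n}" "b \<in> {1..n}" "a \<noteq> b"
        by (auto simp: inside_def)
      show "x \<in> sm n (2 + 1)" using x g by (auto simp: sm_def monoms_def sqfree_def)
    qed
    show "sm n (2 + 1) \<subseteq> up n (inside n B)"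
    proof
      fix m assume "m \<in> sm n (2 + 1)"
      then obtain a b c where abc: "a \<in> {1..n}" "b \<in> {1..n}" "c \<in> {1..n}" "a \<noteq> b" "a \<noteq> c" "b \<noteq> c"
        "m = {#a, b, c#}" using sm3_iff[of m n] by auto
      have "(a \<in> B \<longleftrightarrow> b \<in> B) \<or> (a \<in> B \<longleftrightarrow> c \<in> B) \<or> (b \<in> B \<longleftrightarrow> c \<in> B)" by blast
      moreover
      { assume h: "a \<in> B \<longleftrightarrow> b \<in> B"
        have "ed a b \<in> inside n B" using abc h unfolding inside_def by blast
        moreover have "m = ed a b + {#c#}" using abc by (simp add: multiset_eq_iff)
        ultimately have "m \<in> up n (inside n B)" using abc unfolding up_def by fastforce }
      moreover
      { assume h: "a \<in> B \<longleftrightarrow> c \<in> B"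
        have "ed a c \<in> inside n B" using abc h unfolding inside_def by blast
        moreover have "m = ed a c + {#b#}" using abc by (simp add: multiset_eq_iff)
        ultimately have "m \<in> up n (inside n B)" using abc unfolding up_def by fastforce }
      moreover
      { assume h: "b \<in> B \<longleftrightarrow> c \<in> B"
        have "ed b c \<in> inside n B" using abc h unfolding inside_def by blast
        moreover have "m = ed b c + {#a#}" using abc by (simp add: multiset_eq_iff)
        ultimately have "m \<in> up n (inside n B)" using abc unfolding up_def by fastforce }
      ultimately show "m \<in> up n (inside n B)" by blast
    qed
  qed
  show "down (inside n B) = sm n (2 - 1)"
  proof
    show "down (inside n B) \<subseteq> sm n (2 - 1)"
    proof
      fix x assume "x \<in> down (inside n B)"
      then obtain g i where x: "x = g - {#i#}" "g \<in> inside n B" "i \<in># g"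
        by (auto simp: down_def)
      then obtain a b where g: "g = ed a b" "a \<in> {1..n}" "b \<in> {1..n}" "a \<noteq> b"
        by (auto simp: inside_def)
      have "x = {#b#} \<or> x = {#a#}" using x g by auto
      then show "x \<in> sm n (2 - 1)" using g sm1_iff by auto
    qed
    show "sm n (2 - 1) \<subseteq> down (inside n B)"
    proof
      fix x assume "x \<in> sm n (2 - 1)"
      then obtain a where a: "a \<in> {1..n}" "x = {#a#}" using sm1_iff by auto
      have fB: "finite B" using B finite_subset by blast
      obtain b where b: "b \<in> {1..n}" "b \<noteq> a" "a \<in> B \<longleftrightarrow> b \<in> B"
      proof (cases "a \<in> B")
        case True
        then obtain b where "b \<in> B" "b \<noteq> a" using exists_other[OF fB c1] by blast
        then show ?thesis using that True B by blast
      next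
        case False
        then obtain b where "b \<in> {1..n} - B" "b \<noteq> a" using exists_other[OF _ c2] by blast
        then show ?thesis using that False by blast
      qed
      have "ed b a \<in> inside n B" using a b unfolding inside_def by blast
      moreover have "x = ed b a - {#b#}" using a by simp
      ultimately show "x \<in> down (inside n B)" unfolding down_def using a by fastforce
    qed
  qed
qed



lemma mantel:
  assumes A: "A \<subseteq> sm n 2" and up: "sm n 3 \<subseteq> up n A" and n1: "1 \<le> n"
  shows "card (sm n 2 - A) \<le> n div 2 * (n - n div 2)"
    and "card (sm n 2 - A) = n div 2 * (n - n div 2) \<Longrightarrow>
           \<exists>B. B \<subseteq> {1..n} \<and> card B = n div 2 \<and> A = inside n B"
proof -
  define H where "H = sm n 2 - A"
  define Nb where "Nb u = {w \<in> {1..n}. ed u w \<in> H}" for u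
  have finH: "finite H" unfolding H_def using sm2_finite by blast
  have symH: "ed u w \<in> H \<longleftrightarrow> ed w u \<in> H" for u w by (simp add: add_mset_commute)
  have Hsm: "ed u w \<in> H \<Longrightarrow> u \<in> {1..n} \<and> w \<in> {1..n} \<and> u \<noteq> w" for u w
    unfolding H_def using ed_sm2_iff by blast
  have tri: "ed x y \<notin> H" if vx: "ed v x \<in> H" and vy: "ed v y \<in> H" and xy: "x \<noteq> y" for v x y
  proof
    assume xyH: "ed x y \<in> H"
    have "{#v, x, y#} \<in> sm n 3" using Hsm[OF vx] Hsm[OF vy] xy sm3_iff by blast
    then have "{#v, x, y#} \<in> up n A" using up by blast
    then obtain g i where g: "{#v, x, y#} = g + {#i#}" "g \<in> A" unfolding up_def by blast
    then have "g = ed v x \<or> g = ed v y \<or> g = ed x y" using sub_triple by metis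
    then show False using g(2) vx vy xyH unfolding H_def by blast
  qed
  have finNb: "finite (Nb u)" for u unfolding Nb_def by simp
  have NbV: "Nb u \<subseteq> {1..n}" for u unfolding Nb_def by blast
  obtain v where v: "v \<in> {1..n}" "\<forall>u\<in>{1..n}. card (Nb u) \<le> card (Nb v)"
  proof -
    have ne: "(\<lambda>u. card (Nb u)) ` {1..n} \<noteq> {}" using n1 by auto
    have fin: "finite ((\<lambda>u. card (Nb u)) ` {1..n})" by simp
    obtain v where "v \<in> {1..n}" "card (Nb v) = Max ((\<lambda>u. card (Nb u)) ` {1..n})"
      using Max_in[OF fin ne] by auto
    then show ?thesis using that Max_ge[OF fin] by fastforce
  qed
  define B where "B = Nb v"
  define D where "D = card B"
  define W where "W = {1..n} - B"
  have BV: "B \<subseteq> {1..n}" unfolding B_def by (rule NbV)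
  have finB: "finite B" using BV finite_subset by blast
  have cardW: "card W = n - D" unfolding W_def D_def using card_Diff_subset[OF finB BV] by simp
  have finW: "finite W" unfolding W_def by simp
  have DleN: "D \<le> n" unfolding D_def using card_mono[OF _ BV] by simp
  have degW: "card (Nb u) \<le> D" if "u \<in> W" for u using v(2) that unfolding W_def D_def B_def by blast
  have edges: "\<exists>x y. e = ed x y \<and> x \<in> {1..n} \<and> y \<in> {1..n} \<and> x \<noteq> y" if "e \<in> H" for e
    using that sm2_iff[of e n] unfolding H_def by blast
  have notBB: "\<not> (x \<in> B \<and> y \<in> B)" if "ed x y \<in> H" for x y
  proof
    assume "x \<in> B \<and> y \<in> B"
    then have "ed v x \<in> H" "ed v y \<in> H" unfolding B_def Nb_def by auto
    moreover have "x \<noteq> y" using Hsm[OF that] by blast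
    ultimately show False using tri that by blast
  qed
  have cover: "H \<subseteq> (\<Union>u\<in>W. ed u ` Nb u)"
  proof
    fix e assume e: "e \<in> H"
    then obtain x y where xy: "e = ed x y" "x \<in> {1..n}" "y \<in> {1..n}" using edges by blast
    have "ed x y \<in> H" "ed y x \<in> H" using e xy symH by auto
    then have yx: "y \<in> Nb x" "x \<in> Nb y" using xy unfolding Nb_def by auto
    show "e \<in> (\<Union>u\<in>W. ed u ` Nb u)"
    proof (cases "x \<in> W")
      case True then show ?thesis using xy yx by blast
    next
      case False
      then have "x \<in> B" using xy unfolding W_def by blast
      then have "y \<in> W" using notBB \<open>ed x y \<in> H\<close> xy unfolding W_def by blast
      moreover have "e = ed y x" using xy by (simp add: add_mset_commute)
      ultimately show ?thesis using yx by blast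
    qed
  qed
  have sumbound: "(\<Sum>u\<in>S. card (ed u ` Nb u)) \<le> card S * D" if "S \<subseteq> W" for S
  proof -
    have "(\<Sum>u\<in>S. card (ed u ` Nb u)) \<le> (\<Sum>u\<in>S. D)"
      by (rule sum_mono) (meson card_image_le finNb degW le_trans subsetD that)
    then show ?thesis by simp
  qed
  have bound1: "card H \<le> card W * D"
  proof -
    have "card H \<le> card (\<Union>u\<in>W. ed u ` Nb u)" by (rule card_mono) (use finW finNb cover in auto)
    also have "\<dots> \<le> (\<Sum>u\<in>W. card (ed u ` Nb u))" by (rule card_UN_le[OF finW])
    also have "\<dots> \<le> card W * D" using sumbound by blast
    finally show ?thesis .
  qed
  have qb: "D * (n - D) \<le> n div 2 * (n - n div 2)" using qmax(1)[OF DleN] .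
  show "card (sm n 2 - A) \<le> n div 2 * (n - n div 2)"
    using bound1 qb cardW unfolding H_def by (simp add: mult.commute)
  assume eqq: "card (sm n 2 - A) = n div 2 * (n - n div 2)"
  then have eqH: "card H = n div 2 * (n - n div 2)" unfolding H_def .
  have Dq: "D * (n - D) = n div 2 * (n - n div 2)"
    using bound1 qb cardW eqH by (simp add: mult.commute)
  have Dcases: "D = n div 2 \<or> D = n - n div 2" using qmax(2)[OF DleN Dq] .
  have Hcross: "H \<subseteq> cross n B"
  proof
    fix e assume e: "e \<in> H"
    then obtain x y where xy: "e = ed x y" "x \<in> {1..n}" "y \<in> {1..n}" "x \<noteq> y" using edges by blast
    have exy: "ed x y \<in> H" "ed y x \<in> H" using e xy symH by auto
    then have yx: "y \<in> Nb x" "x \<in> Nb y" using xy unfolding Nb_def by auto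
    have "\<not> (x \<in> W \<and> y \<in> W)"
    proof
      assume xyW: "x \<in> W \<and> y \<in> W"
      have cov2: "H \<subseteq> (\<Union>u\<in>W - {x}. ed u ` Nb u) \<union> ed x ` (Nb x - {y})"
      proof
        fix e' assume "e' \<in> H"
        then obtain u where u: "u \<in> W" "e' \<in> ed u ` Nb u" using cover by blast
        show "e' \<in> (\<Union>u\<in>W - {x}. ed u ` Nb u) \<union> ed x ` (Nb x - {y})"
        proof (cases "u = x")
          case False then show ?thesis using u by blast
        next
          case True
          then obtain w where w: "w \<in> Nb x" "e' = ed x w" using u by blast
          show ?thesis
          proof (cases "w = y")
            case False then show ?thesis using w by blast
          next
            case True
            then have "e' = ed y x" using w by (simp add: add_mset_commute)
            then show ?thesis using yx xyW xy(4) by blast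
          qed
        qed
      qed
      have c1: "card (Nb x - {y}) = card (Nb x) - 1" using yx(1) finNb by simp
      have c2: "1 \<le> card (Nb x)" using yx(1) finNb card_0_eq[of "Nb x"] by fastforce
      have c3: "card (Nb x) \<le> D" using degW xyW by blast
      have c4: "card (W - {x}) = card W - 1" using xyW finW by simp
      have c5: "1 \<le> card W" using xyW finW card_0_eq[of W] by fastforce
      have "card H \<le> card ((\<Union>u\<in>W - {x}. ed u ` Nb u) \<union> ed x ` (Nb x - {y}))"
        by (rule card_mono) (use finW finNb cov2 in auto)
      also have "\<dots> \<le> card (\<Union>u\<in>W - {x}. ed u ` Nb u) + card (ed x ` (Nb x - {y}))"
        by (rule card_Un_le)
      also have "\<dots> \<le> (\<Sum>u\<in>W - {x}. card (ed u ` Nb u)) + card (Nb x - {y})"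
        by (intro add_mono card_UN_le card_image_le) (use finW finNb in auto)
      also have "\<dots> \<le> card (W - {x}) * D + (D - 1)"
        using sumbound[of "W - {x}"] c1 c3 by force
      finally have "card H \<le> (card W - 1) * D + (D - 1)" using c4 by simp
      moreover have "(card W - 1) * D + (D - 1) < card W * D"
      proof -
        have "(card W - 1) * D + D = card W * D" using c5 by (simp add: algebra_simps)
        then show ?thesis using c2 c3 by linarith
      qed
      ultimately show False using bound1 eqH qb cardW Dq by (simp add: mult.commute)
    qed
    moreover have "\<not> (x \<in> B \<and> y \<in> B)" using notBB exy(1) by blast
    ultimately have "(x \<in> B \<and> y \<in> {1..n} - B) \<or> (y \<in> B \<and> x \<in> {1..n} - B)"
      using xy unfolding W_def by blast
    then show "e \<in> cross n B"
    proof
      assume "x \<in> B \<and> y \<in> {1..n} - B"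
      then show ?thesis using xy unfolding cross_def by blast
    next
      assume "y \<in> B \<and> x \<in> {1..n} - B"
      moreover have "e = ed y x" using xy by (simp add: add_mset_commute)
      ultimately show ?thesis unfolding cross_def by blast
    qed
  qed
  have cc: "card (cross n B) = D * (n - D)" using card_cross[OF BV] unfolding D_def .
  have "H = cross n B"
    using card_subset_eq[OF _ Hcross] finite_subset[OF cross_sub[OF BV] sm2_finite] eqH Dq cc by simp
  then have AB: "A = inside n B" using A inside_eq[OF BV] unfolding H_def by blast
  show "\<exists>B. B \<subseteq> {1..n} \<and> card B = n div 2 \<and> A = inside n B"
  proof (cases "D = n div 2")
    case True then show ?thesis using AB BV unfolding D_def by blast
  next
    case False
    then have "D = n - n div 2" using Dcases by blast
    then have "card ({1..n} - B) = n div 2" using card_Diff_subset[OF finB BV] unfolding D_def by simp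
    moreover have "A = inside n ({1..n} - B)" using AB inside_compl by simp
    ultimately show ?thesis by blast
  qed
qed



lemma card_inside:
  assumes "B \<subseteq> {1..n}" shows "card (inside n B) = card (sm n 2) - card B * (n - card B)"
proof -
  have "inside n B = sm n 2 - cross n B" using inside_eq[OF assms] .
  moreover have "cross n B \<subseteq> sm n 2" using cross_sub[OF assms] .
  ultimately show ?thesis using card_Diff_subset[OF finite_subset[OF _ sm2_finite]] card_cross[OF assms] by simp
qed

lemma inside_perfect_half:
  assumes n: "4 \<le> n" and B: "B \<subseteq> {1..n}" "card B = n div 2"
  shows "perfect n 2 (inside n B)"
proof -
  have fB: "finite B" using B finite_subset by blast
  have "card ({1..n} - B) = n - n div 2" using card_Diff_subset[OF fB B(1)] B(2) by simp
  then show ?thesis using perfect_inside[OF B(1)] B n by simp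
qed

lemma perfect_card_ge:
  assumes n: "4 \<le> n" and P: "perfect n 2 A"
  shows "card (sm n 2) - n div 2 * (n - n div 2) \<le> card A"
proof -
  have A: "A \<subseteq> sm n 2" and up: "sm n 3 \<subseteq> up n A" using P unfolding perfect_def by auto
  have "card (sm n 2 - A) \<le> n div 2 * (n - n div 2)" using mantel(1)[OF A up] n by simp
  moreover have "card (sm n 2 - A) = card (sm n 2) - card A" using card_Diff_subset[OF finite_subset[OF A sm2_finite] A] .
  ultimately show ?thesis by linarith
qed

lemma q_le: "n div 2 * (n - n div 2) \<le> card (sm n 2)"
proof -
  have B: "{1..n div 2} \<subseteq> {1..n}" by auto
  have "card (cross n {1..n div 2}) \<le> card (sm n 2)" using card_mono[OF sm2_finite cross_sub[OF B]] .
  then show ?thesis using card_cross[OF B] by simp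
qed

lemma N_val:
  assumes n: "4 \<le> n"
  shows "N n 2 = card (sm n 2) - n div 2 * (n - n div 2)"
  unfolding N_def
proof (rule Least_equality)
  define B where "B = {1..n div 2}"
  have B: "B \<subseteq> {1..n}" "card B = n div 2" unfolding B_def by auto
  show "\<exists>A. perfect n 2 A \<and> card A = card (sm n 2) - n div 2 * (n - n div 2)"
    using inside_perfect_half[OF n B] card_inside[OF B(1)] B(2) by metis
  show "\<And>y. \<exists>A. perfect n 2 A \<and> card A = y \<Longrightarrow> card (sm n 2) - n div 2 * (n - n div 2) \<le> y"
    using perfect_card_ge[OF n] by blast
qed

lemma min_perfect_iff:
  assumes n: "4 \<le> n"
  shows "(perfect n 2 A \<and> card A = N n 2) \<longleftrightarrow> (\<exists>B. B \<subseteq> {1..n} \<and> card B = n div 2 \<and> A = inside n B)"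
proof
  assume h: "perfect n 2 A \<and> card A = N n 2"
  have A: "A \<subseteq> sm n 2" and up: "sm n 3 \<subseteq> up n A" using h unfolding perfect_def by auto
  have c: "card (sm n 2 - A) = card (sm n 2) - card A" using card_Diff_subset[OF finite_subset[OF A sm2_finite] A] .
  have le: "card (sm n 2 - A) \<le> n div 2 * (n - n div 2)" using mantel(1)[OF A up] n by simp
  have "card A \<le> card (sm n 2)" using card_mono[OF sm2_finite A] .
  moreover have "card A = card (sm n 2) - n div 2 * (n - n div 2)" using h N_val[OF n] by simp
  ultimately have "card (sm n 2 - A) = n div 2 * (n - n div 2)" using c le q_le[of n] by linarith
  then show "\<exists>B. B \<subseteq> {1..n} \<and> card B = n div 2 \<and> A = inside n B" using mantel(2)[OF A up] n by simp
next
  assume "\<exists>B. B \<subseteq> {1..n} \<and> card B = n div 2 \<and> A = inside n B"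
  then obtain B where B: "B \<subseteq> {1..n}" "card B = n div 2" "A = inside n B" by blast
  then show "perfect n 2 A \<and> card A = N n 2"
    using inside_perfect_half[OF n B(1,2)] card_inside[OF B(1)] N_val[OF n] by simp
qed



definition gen :: "nat \<Rightarrow> monomial set \<Rightarrow> monomial set" where
  "gen n E = {m \<in> monoms n. \<exists>g\<in>E. g \<subseteq># m}"

lemma monoms_sub: "m \<in> monoms n \<Longrightarrow> g \<subseteq># m \<Longrightarrow> g \<in> monoms n"
  unfolding monoms_def by (auto dest: mset_subset_eqD)

lemma monoms_diff: "m \<in> monoms n \<Longrightarrow> m - g \<in> monoms n"
  unfolding monoms_def by (auto dest: in_diffD)

lemma gens_below:
  assumes "m \<in> I" shows "\<exists>g\<in>gens I. g \<subseteq># m"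
  using assms
proof (induction "size m" arbitrary: m rule: less_induct)
  case less
  show ?case
  proof (cases "m \<in> gens I")
    case True then show ?thesis by blast
  next
    case False
    then obtain m' where m': "m' \<in> I" "m' \<subseteq># m" "m' \<noteq> m" using less.prems unfolding gens_def by blast
    then have "m' \<subset># m" by (simp add: subset_mset.le_neq_trans)
    then have "size m' < size m" by (rule mset_subset_size)
    then obtain g where "g \<in> gens I" "g \<subseteq># m'" using less.hyps m'(1) by blast
    then show ?thesis using m'(2) subset_mset.order_trans by blast
  qed
qed

lemma gen_gens: assumes "monomial_ideal n I" shows "gen n (gens I) = I"
proof
  have Im: "I \<subseteq> monoms n" and cl: "\<forall>m\<in>I. \<forall>m'\<in>monoms n. m + m' \<in> I"
    using assms unfolding monomial_ideal_def by auto
  show "gen n (gens I) \<subseteq> I"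
  proof
    fix m assume "m \<in> gen n (gens I)"
    then obtain g where m: "m \<in> monoms n" "g \<in> gens I" "g \<subseteq># m" unfolding gen_def by blast
    then have "g \<in> I" unfolding gens_def by blast
    moreover have "m = g + (m - g)" using m(3) by simp
    moreover have "m - g \<in> monoms n" using monoms_diff[OF m(1)] .
    ultimately show "m \<in> I" using cl by metis
  qed
  show "I \<subseteq> gen n (gens I)" using gens_below Im unfolding gen_def by blast
qed

lemma size_le_gen: "m \<in> gen n E \<Longrightarrow> E \<subseteq> sm n 2 \<Longrightarrow> 2 \<le> size m"
  unfolding gen_def sm_def using size_mset_mono by fastforce

lemma sm2_sub_eq: "g \<in> sm n 2 \<Longrightarrow> g' \<in> sm n 2 \<Longrightarrow> g' \<subseteq># g \<Longrightarrow> g' = g"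
proof (rule ccontr)
  assume "g \<in> sm n 2" "g' \<in> sm n 2" "g' \<subseteq># g" "g' \<noteq> g"
  then have "g' \<subset># g" by (simp add: subset_mset.le_neq_trans)
  then have "size g' < size g" by (rule mset_subset_size)
  then show False using \<open>g \<in> sm n 2\<close> \<open>g' \<in> sm n 2\<close> unfolding sm_def by simp
qed

lemma gens_gen: assumes E: "E \<subseteq> sm n 2" shows "gens (gen n E) = E"
proof
  show "gens (gen n E) \<subseteq> E"
  proof
    fix m assume m: "m \<in> gens (gen n E)"
    then obtain g where g: "m \<in> monoms n" "g \<in> E" "g \<subseteq># m" unfolding gens_def gen_def by blast
    have "g \<in> monoms n" using g E unfolding sm_def by blast
    then have "g \<in> gen n E" using g unfolding gen_def by blast
    then have "g = m" using m g(3) unfolding gens_def by blast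
    then show "m \<in> E" using g by simp
  qed
  show "E \<subseteq> gens (gen n E)"
  proof
    fix g assume g: "g \<in> E"
    have gm: "g \<in> gen n E" using g E unfolding gen_def sm_def by blast
    have "m' = g" if h: "m' \<in> gen n E" "m' \<subseteq># g" for m'
    proof -
      obtain g' where "g' \<in> E" "g' \<subseteq># m'" using h(1) unfolding gen_def by blast
      then have "g' \<subseteq># g" using h(2) subset_mset.order_trans by blast
      then have "g' = g" using sm2_sub_eq \<open>g' \<in> E\<close> g E by blast
      then show ?thesis using \<open>g' \<subseteq># m'\<close> h(2) by simp
    qed
    then show "g \<in> gens (gen n E)" using gm unfolding gens_def by blast
  qed
qed

lemma gen_ideal: assumes E: "E \<subseteq> sm n 2"
  shows "sqfree_monomial_ideal n (gen n E)" "ideal_of_degree (gen n E) 2"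
proof -
  have "monomial_ideal n (gen n E)"
    unfolding monomial_ideal_def
  proof (intro conjI ballI)
    show "gen n E \<subseteq> monoms n" unfolding gen_def by blast
    fix m m' assume m: "m \<in> gen n E" and m': "m' \<in> monoms n"
    then obtain g where g: "m \<in> monoms n" "g \<in> E" "g \<subseteq># m" unfolding gen_def by blast
    have "m + m' \<in> monoms n" using g(1) m' unfolding monoms_def by auto
    moreover have "g \<subseteq># m + m'" using g(3) mset_subset_eq_add_left subset_mset.order_trans by blast
    ultimately show "m + m' \<in> gen n E" using g(2) unfolding gen_def by blast
  qed
  then show "sqfree_monomial_ideal n (gen n E)"
    unfolding sqfree_monomial_ideal_def gens_gen[OF E] using E unfolding sm_def by blast
  show "ideal_of_degree (gen n E) 2" unfolding ideal_of_degree_def gens_gen[OF E] using E unfolding sm_def by blast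
qed

lemma sqfree_size: "sqfree g \<Longrightarrow> size g = card (set_mset g)"
proof -
  assume "sqfree g"
  then have "size g = size (mset_set (set_mset g))" using sqfree_set by simp
  then show ?thesis by simp
qed

lemma triple_below:
  assumes "sqfree g" "3 \<le> size g" "g \<in> monoms n"
  shows "\<exists>t\<in>sm n 3. t \<subseteq># g"
proof -
  obtain k where "size g = Suc (Suc (Suc k))" using assms(2) by (intro that[of "size g - 3"]) simp
  then obtain a g1 where g1: "g = add_mset a g1" "size g1 = Suc (Suc k)"
    by (metis size_eq_Suc_imp_eq_union size_add_mset Suc_inject)
  then obtain b g2 where g2: "g1 = add_mset b g2" "size g2 = Suc k"
    by (metis size_eq_Suc_imp_eq_union size_add_mset Suc_inject)
  then obtain c g3 where g3: "g2 = add_mset c g3"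
    by (metis size_eq_Suc_imp_eq_union)
  have ge: "g = {#a, b, c#} + g3" using g1 g2 g3 by simp
  have "{#a, b, c#} \<in> sm n 3"
  proof -
    have "{#a, b, c#} \<subseteq># g" using ge by simp
    then have "sqfree {#a, b, c#}"
      using assms(1) unfolding sqfree_def by (meson mset_subset_eq_count order_trans)
    moreover have "{#a, b, c#} \<in> monoms n" using assms(3) monoms_sub \<open>{#a, b, c#} \<subseteq># g\<close> by blast
    ultimately show ?thesis unfolding sm_def by simp
  qed
  moreover have "{#a, b, c#} \<subseteq># g" using ge by simp
  ultimately show ?thesis by blast
qed



lemma sigma_sm2: "g \<in> sm n 2 \<Longrightarrow> \<sigma> g \<subseteq> {1..n} \<and> card (\<sigma> g) = 2"
  unfolding sm_def monoms_def \<sigma>_def using sqfree_size by auto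

lemma card_sigma_img: "X \<subseteq> sm n 2 \<Longrightarrow> card (\<sigma> ` X) = card X"
proof -
  assume X: "X \<subseteq> sm n 2"
  have "inj_on \<sigma> X" unfolding inj_on_def using X sqfree_inj unfolding sm_def by blast
  then show ?thesis by (rule card_image)
qed

lemma fideal_iff:
  assumes E: "E \<subseteq> sm n 2" and AE: "A \<subseteq> E" and P: "perfect n 2 A" and n1: "1 \<le> n"
  shows "f_ideal n (gen n E) \<longleftrightarrow> card E = card (sm n 2 - E)"
proof -
  define F where "F = facet_complex (gen n E)"
  define SR where "SR = SR_complex n (gen n E)"
  define Low where "Low i = {S. S \<subseteq> {1..n} \<and> finite S \<and> card S = i \<and> i \<le> 1}" for i :: nat
  have Fd: "F = {S. \<exists>g\<in>E. S \<subseteq> \<sigma> g}" unfolding F_def facet_complex_def gens_gen[OF E] ..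
  have SRd: "SR = {\<sigma> g | g. g \<in> monoms n \<and> sqfree g \<and> g \<notin> gen n E}" unfolding SR_def SR_complex_def ..
  have Asm: "A \<subseteq> sm n 2" and up: "up n A = sm n 3" and down: "down A = sm n 1"
    using P unfolding perfect_def by auto
  have F2: "{S \<in> F. card S = 2} = \<sigma> ` E"
  proof
    show "{S \<in> F. card S = 2} \<subseteq> \<sigma> ` E"
    proof
      fix S assume "S \<in> {S \<in> F. card S = 2}"
      then obtain g where g: "g \<in> E" "S \<subseteq> \<sigma> g" "card S = 2" unfolding Fd by blast
      have "card (\<sigma> g) = 2" using sigma_sm2 g E by blast
      moreover have "finite (\<sigma> g)" unfolding \<sigma>_def by simp
      ultimately have "S = \<sigma> g" using g card_subset_eq by metis
      then show "S \<in> \<sigma> ` E" using g by blast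
    qed
    show "\<sigma> ` E \<subseteq> {S \<in> F. card S = 2}" using sigma_sm2 E unfolding Fd by blast
  qed
  have SR2: "{S \<in> SR. card S = 2} = \<sigma> ` (sm n 2 - E)"
  proof
    show "{S \<in> SR. card S = 2} \<subseteq> \<sigma> ` (sm n 2 - E)"
    proof
      fix S assume "S \<in> {S \<in> SR. card S = 2}"
      then obtain g where g: "S = \<sigma> g" "g \<in> monoms n" "sqfree g" "g \<notin> gen n E" "card S = 2"
        unfolding SRd by blast
      have "size g = 2" using g sqfree_size unfolding \<sigma>_def by simp
      then have "g \<in> sm n 2" using g unfolding sm_def by simp
      moreover have "g \<notin> E" using g unfolding gen_def by blast
      ultimately show "S \<in> \<sigma> ` (sm n 2 - E)" using g by blast
    qed
    show "\<sigma> ` (sm n 2 - E) \<subseteq> {S \<in> SR. card S = 2}"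
    proof
      fix S assume "S \<in> \<sigma> ` (sm n 2 - E)"
      then obtain g where g: "S = \<sigma> g" "g \<in> sm n 2" "g \<notin> E" by blast
      have "g \<notin> gen n E"
      proof
        assume "g \<in> gen n E"
        then obtain g' where "g' \<in> E" "g' \<subseteq># g" unfolding gen_def by blast
        then have "g' = g" using sm2_sub_eq g E by blast
        then show False using g \<open>g' \<in> E\<close> by blast
      qed
      moreover have "g \<in> monoms n" "sqfree g" using g unfolding sm_def by auto
      ultimately have "S \<in> SR" using g unfolding SRd by blast
      then show "S \<in> {S \<in> SR. card S = 2}" using sigma_sm2 g by blast
    qed
  qed
  have Fi: "{S \<in> F. card S = i} = Low i" if i: "i \<noteq> 2" for i
  proof
    show "{S \<in> F. card S = i} \<subseteq> Low i"
    proof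
      fix S assume "S \<in> {S \<in> F. card S = i}"
      then obtain g where g: "g \<in> E" "S \<subseteq> \<sigma> g" "card S = i" unfolding Fd by blast
      have sg: "card (\<sigma> g) = 2" "\<sigma> g \<subseteq> {1..n}" using sigma_sm2 g E by auto
      have fin: "finite (\<sigma> g)" unfolding \<sigma>_def by simp
      have "finite S" using fin g finite_subset by blast
      moreover have "card S \<le> 2" using card_mono[OF fin g(2)] sg by simp
      ultimately show "S \<in> Low i" using g sg i unfolding Low_def by auto
    qed
    show "Low i \<subseteq> {S \<in> F. card S = i}"
    proof
      fix S assume S: "S \<in> Low i"
      then have S': "S \<subseteq> {1..n}" "finite S" "card S = i" "i \<le> 1" unfolding Low_def by auto
      have "\<exists>g\<in>E. S \<subseteq> \<sigma> g"
      proof (cases "i = 0")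
        case True
        then have "S = {}" using S' by simp
        have "{#1#} \<in> sm n 1" using n1 sm1_iff[of "{#1#}" n] by auto
        then have "{#1#} \<in> down A" using down by simp
        then obtain g where "g \<in> A" unfolding down_def by blast
        then show ?thesis using AE \<open>S = {}\<close> by blast
      next
        case False
        then have "card S = 1" using S' by simp
        then obtain a where a: "S = {a}" by (rule card_1_singletonE)
        then have "{#a#} \<in> down A" using down S' sm1_iff by auto
        then obtain g j where gj: "g \<in> A" "{#a#} = g - {#j#}" unfolding down_def by blast
        then have "a \<in># g" by (metis in_diffD union_single_eq_member)
        then show ?thesis using gj AE a unfolding \<sigma>_def by blast
      qed
      then show "S \<in> {S \<in> F. card S = i}" using S' unfolding Fd by blast
    qed
  qed
  have SRi: "{S \<in> SR. card S = i} = Low i" if i: "i \<noteq> 2" for i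
  proof
    show "{S \<in> SR. card S = i} \<subseteq> Low i"
    proof
      fix S assume "S \<in> {S \<in> SR. card S = i}"
      then obtain g where g: "S = \<sigma> g" "g \<in> monoms n" "sqfree g" "g \<notin> gen n E" "card S = i"
        unfolding SRd by blast
      have "\<not> 3 \<le> size g"
      proof
        assume "3 \<le> size g"
        then obtain t where t: "t \<in> sm n 3" "t \<subseteq># g" using triple_below g by blast
        then have "t \<in> up n A" using up by simp
        then obtain h j where hj: "t = h + {#j#}" "h \<in> A" unfolding up_def by blast
        then have "h \<subseteq># g" using t(2) mset_subset_eq_add_left subset_mset.order_trans by blast
        then have "g \<in> gen n E" using hj AE g unfolding gen_def by blast
        then show False using g by blast
      qed
      moreover have "size g = card S" using g sqfree_size unfolding \<sigma>_def by simp
      moreover have "S \<subseteq> {1..n}" using g unfolding monoms_def \<sigma>_def by simp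
      moreover have "finite S" using g unfolding \<sigma>_def by simp
      ultimately show "S \<in> Low i" using g i unfolding Low_def by auto
    qed
    show "Low i \<subseteq> {S \<in> SR. card S = i}"
    proof
      fix S assume S: "S \<in> Low i"
      then have S': "S \<subseteq> {1..n}" "finite S" "card S = i" "i \<le> 1" unfolding Low_def by auto
      define g where "g = mset_set S"
      have "sqfree g" unfolding g_def using sqfree_mset_set S' by blast
      moreover have "g \<in> monoms n" unfolding g_def monoms_def using S' by simp
      moreover have "\<sigma> g = S" unfolding g_def \<sigma>_def using S' by simp
      moreover have "g \<notin> gen n E"
      proof
        assume "g \<in> gen n E"
        then have "2 \<le> size g" using size_le_gen E by blast
        then show False unfolding g_def using S' by simp
      qed
      ultimately have "S \<in> SR" unfolding SRd by blast
      then show "S \<in> {S \<in> SR. card S = i}" using S' by blast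
    qed
  qed
  have c2: "fvec F 2 = card E" "fvec SR 2 = card (sm n 2 - E)"
    unfolding fvec_def F2 SR2 using card_sigma_img[OF E] card_sigma_img[of "sm n 2 - E" n] by auto
  have "fvec F = fvec SR \<longleftrightarrow> card E = card (sm n 2 - E)"
  proof
    assume "fvec F = fvec SR" then show "card E = card (sm n 2 - E)" using c2 by metis
  next
    assume h: "card E = card (sm n 2 - E)"
    show "fvec F = fvec SR"
    proof
      fix i show "fvec F i = fvec SR i"
        using h c2 Fi SRi unfolding fvec_def by (cases "i = 2") auto
    qed
  qed
  then show ?thesis unfolding f_ideal_def F_def SR_def using gen_ideal[OF E] by blast
qed



definition Good :: "nat \<Rightarrow> monomial set set" where
  "Good n = {E. E \<subseteq> sm n 2 \<and> card E = card (sm n 2 - E) \<and>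
     (\<exists>B. B \<subseteq> {1..n} \<and> card B = n div 2 \<and> inside n B \<subseteq> E)}"

lemma gens_sm2: assumes "f_ideal n I" "ideal_of_degree I 2" shows "gens I \<subseteq> sm n 2"
proof
  fix g assume g: "g \<in> gens I"
  have "monomial_ideal n I" "\<forall>g\<in>gens I. sqfree g" using assms(1)
    unfolding f_ideal_def sqfree_monomial_ideal_def by auto
  then have "g \<in> monoms n" "sqfree g" using g unfolding monomial_ideal_def gens_def by auto
  moreover have "size g = 2" using assms(2) g unfolding ideal_of_degree_def by blast
  ultimately show "g \<in> sm n 2" unfolding sm_def by simp
qed

lemma card_U: assumes n: "4 \<le> n" shows "card (U n) = card (Good n)"
proof -
  have mi: "monomial_ideal n I" if "I \<in> U n" for I
    using that unfolding U_def f_ideal_def sqfree_monomial_ideal_def by blast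
  have inj: "inj_on gens (U n)"
  proof (rule inj_onI)
    fix I I' assume h: "I \<in> U n" "I' \<in> U n" "gens I = gens I'"
    have "I = gen n (gens I)" using gen_gens[OF mi[OF h(1)]] by simp
    also have "\<dots> = gen n (gens I')" using h(3) by simp
    also have "\<dots> = I'" using gen_gens[OF mi[OF h(2)]] by simp
    finally show "I = I'" .
  qed
  have img: "gens ` U n = Good n"
  proof
    show "gens ` U n \<subseteq> Good n"
    proof
      fix E assume "E \<in> gens ` U n"
      then obtain I where I: "I \<in> U n" "E = gens I" by blast
      have fI: "f_ideal n I" and dI: "ideal_of_degree I 2" using I unfolding U_def by auto
      have Esm: "E \<subseteq> sm n 2" using gens_sm2[OF fI dI] I by simp
      obtain A where A: "A \<subseteq> E" "perfect n 2 A" "card A = N n 2" using I unfolding U_def by blast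
      obtain B where B: "B \<subseteq> {1..n}" "card B = n div 2" "A = inside n B"
        using min_perfect_iff[OF n, THEN iffD1, OF conjI[OF A(2) A(3)]] by blast
      have "I = gen n E" using gen_gens[OF mi[OF I(1)]] I by simp
      then have "card E = card (sm n 2 - E)" using fideal_iff[OF Esm A(1,2)] fI n by simp
      then show "E \<in> Good n" unfolding Good_def using Esm A B by blast
    qed
    show "Good n \<subseteq> gens ` U n"
    proof
      fix E assume "E \<in> Good n"
      then obtain B where E: "E \<subseteq> sm n 2" "card E = card (sm n 2 - E)"
        and B: "B \<subseteq> {1..n}" "card B = n div 2" "inside n B \<subseteq> E" unfolding Good_def by blast
      have P: "perfect n 2 (inside n B) \<and> card (inside n B) = N n 2"
        using min_perfect_iff[OF n, THEN iffD2, OF exI[of _ B]] B by simp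
      have n1: "1 \<le> n" using n by simp
      have "f_ideal n (gen n E)" using fideal_iff[OF E(1) B(3) conjunct1[OF P] n1] E(2) by blast
      moreover have "ideal_of_degree (gen n E) 2" using gen_ideal[OF E(1)] by simp
      moreover have "gens (gen n E) = E" using gens_gen[OF E(1)] .
      ultimately have "gen n E \<in> U n" unfolding U_def using P B(3) by blast
      then show "E \<in> gens ` U n" using gens_gen[OF E(1)] by force
    qed
  qed
  show ?thesis using card_image[OF inj] img by simp
qed



lemma uniq_part:
  assumes B: "B \<subseteq> {1..n}" and B': "B' \<subseteq> {1..n}" and cB: "card B = s" and cB': "card B' = s"
    and sn: "s \<le> n - s" and iB': "inside n B' \<subseteq> E" and small: "card (E \<inter> cross n B) < s"
  shows "B' = B \<or> B' = {1..n} - B"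
proof (rule ccontr)
  assume neq: "\<not> (B' = B \<or> B' = {1..n} - B)"
  have finB: "finite B" "finite B'" using B B' finite_subset by blast+
  have finT: "finite (E \<inter> cross n B)" using finite_subset[OF cross_sub[OF B] sm2_finite] by blast
  have "\<not> B \<subseteq> B'"
  proof
    assume "B \<subseteq> B'"
    then have "B = B'" using card_subset_eq[OF finB(2)] cB cB' by simp
    then show False using neq by simp
  qed
  then obtain x where x: "x \<in> B" "x \<notin> B'" by blast
  show False
  proof (cases "B \<inter> B' = {}")
    case True
    then have "B' \<subseteq> {1..n} - B" using B' by blast
    then obtain w where w: "w \<in> {1..n} - B" "w \<notin> B'" using neq by blast
    have "inj_on (\<lambda>y. ed y w) B" by (auto simp: inj_on_def ed_eq_iff)
    moreover have "(\<lambda>y. ed y w) ` B \<subseteq> E \<inter> cross n B"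
    proof
      fix e assume "e \<in> (\<lambda>y. ed y w) ` B"
      then obtain y where y: "y \<in> B" "e = ed y w" by blast
      have "e \<in> cross n B" using y w unfolding cross_def by blast
      moreover have "y \<notin> B'" using True y by blast
      then have "e \<in> inside n B'" using y w B unfolding inside_def by blast
      ultimately show "e \<in> E \<inter> cross n B" using iB' by blast
    qed
    ultimately have "card B \<le> card (E \<inter> cross n B)" using card_inj_on_le finT by blast
    then show False using small cB by simp
  next
    case False
    then obtain z where z: "z \<in> B" "z \<in> B'" by blast
    define f where "f y = (if y \<in> B' then ed z y else ed x y)" for y
    have "inj_on f ({1..n} - B)"
    proof (rule inj_onI)
      fix y1 y2 assume y: "y1 \<in> {1..n} - B" "y2 \<in> {1..n} - B" "f y1 = f y2"
      show "y1 = y2"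
        using y x z unfolding f_def by (auto simp: ed_eq_iff split: if_splits)
    qed
    moreover have "f ` ({1..n} - B) \<subseteq> E \<inter> cross n B"
    proof
      fix e assume "e \<in> f ` ({1..n} - B)"
      then obtain y where y: "y \<in> {1..n} - B" "e = f y" by blast
      show "e \<in> E \<inter> cross n B"
      proof (cases "y \<in> B'")
        case True
        then have e: "e = ed z y" using y unfolding f_def by simp
        have "e \<in> cross n B" using y z e unfolding cross_def by blast
        moreover have "e \<in> inside n B'" using y z e True B unfolding inside_def by blast
        ultimately show ?thesis using iB' by blast
      next
        case False
        then have e: "e = ed x y" using y unfolding f_def by simp
        have "e \<in> cross n B" using y x e unfolding cross_def by blast
        moreover have "e \<in> inside n B'" using y x e False B unfolding inside_def by blast
        ultimately show ?thesis using iB' by blast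
      qed
    qed
    ultimately have "card ({1..n} - B) \<le> card (E \<inter> cross n B)" using card_inj_on_le finT by blast
    moreover have "card ({1..n} - B) = n - s" using card_Diff_subset[OF finB(1) B] cB by simp
    ultimately show False using small sn by simp
  qed
qed

definition Dom :: "nat \<Rightarrow> nat \<Rightarrow> nat set set \<Rightarrow> (nat set \<times> monomial set) set" where
  "Dom n k BB = Sigma BB (\<lambda>B. {X. X \<subseteq> cross n B \<and> card X = k})"

lemma count_generic:
  assumes n: "4 \<le> n"
    and hk: "card (sm n 2) = 2 * (card (sm n 2) - n div 2 * (n - n div 2) + k)"
    and ks: "k < n div 2"
    and BBsub: "BB \<subseteq> {B. B \<subseteq> {1..n} \<and> card B = n div 2}"
    and cov: "\<And>B. B \<subseteq> {1..n} \<Longrightarrow> card B = n div 2 \<Longrightarrow> B \<in> BB \<or> {1..n} - B \<in> BB"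
    and sep: "\<And>B. B \<in> BB \<Longrightarrow> {1..n} - B \<notin> BB"
  shows "card (Good n) = card BB * ((n div 2 * (n - n div 2)) choose k)"
proof -
  define s where "s = n div 2"
  define q where "q = s * (n - s)"
  define C where "C = card (sm n 2)"
  have qC: "q \<le> C" unfolding q_def C_def s_def using q_le .
  have hk': "C = 2 * (C - q + k)" using hk unfolding C_def q_def s_def .
  have sn: "s \<le> n - s" unfolding s_def by simp
  define \<Phi> where "\<Phi> p = inside n (fst p) \<union> snd p" for p :: "nat set \<times> monomial set"
  have BBp: "B \<subseteq> {1..n}" "card B = s" if "B \<in> BB" for B using BBsub that unfolding s_def by auto
  have cin: "card (inside n B) = C - q" if "B \<in> BB" for B
    using card_inside[OF BBp(1)[OF that]] BBp(2)[OF that] unfolding C_def q_def by simp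
  have cardE: "card (inside n B \<union> X) = C - q + k" if "B \<in> BB" "X \<subseteq> cross n B" "card X = k" for B X
  proof -
    have "finite (inside n B)" "finite X"
      using finite_subset[OF inside_sub sm2_finite] finite_subset[OF that(2) finite_subset[OF cross_sub[OF BBp(1)[OF that(1)]] sm2_finite]] by auto
    moreover have "inside n B \<inter> X = {}" using inside_cross_disj that(2) by blast
    ultimately have "card (inside n B \<union> X) = card (inside n B) + card X" by (rule card_Un_disjoint)
    then show ?thesis using cin[OF that(1)] that(3) by simp
  qed
  have img: "\<Phi> ` Dom n k BB = Good n"
  proof
    show "\<Phi> ` Dom n k BB \<subseteq> Good n"
    proof
      fix E assume "E \<in> \<Phi> ` Dom n k BB"
      then obtain B X where BX: "B \<in> BB" "X \<subseteq> cross n B" "card X = k" "E = inside n B \<union> X"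
        unfolding Dom_def \<Phi>_def by auto
      have Esm: "E \<subseteq> sm n 2" using BX inside_sub cross_sub[OF BBp(1)[OF BX(1)]] by blast
      have "card E = C - q + k" using cardE BX by simp
      moreover have "card (sm n 2 - E) = C - card E"
        using card_Diff_subset[OF finite_subset[OF Esm sm2_finite] Esm] unfolding C_def .
      ultimately have "card E = card (sm n 2 - E)" using hk' by simp
      then show "E \<in> Good n" unfolding Good_def using Esm BX BBp[OF BX(1)] unfolding s_def by blast
    qed
    show "Good n \<subseteq> \<Phi> ` Dom n k BB"
    proof
      fix E assume "E \<in> Good n"
      then obtain B0 where E: "E \<subseteq> sm n 2" "card E = card (sm n 2 - E)"
        and B0: "B0 \<subseteq> {1..n}" "card B0 = n div 2" "inside n B0 \<subseteq> E" unfolding Good_def by blast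
      obtain B where B: "B \<in> BB" "inside n B \<subseteq> E"
      proof (cases "B0 \<in> BB")
        case True then show ?thesis using that B0 by blast
      next
        case False
        then have "{1..n} - B0 \<in> BB" using cov B0 by blast
        then show ?thesis using that B0 inside_compl by metis
      qed
      define X where "X = E \<inter> cross n B"
      have EX: "E = inside n B \<union> X" using B E(1) inside_cross_un[OF BBp(1)[OF B(1)]] unfolding X_def by blast
      have Xc: "X \<subseteq> cross n B" unfolding X_def by blast
      have "card (sm n 2 - E) = C - card E"
        using card_Diff_subset[OF finite_subset[OF E(1) sm2_finite] E(1)] unfolding C_def .
      then have cE: "card E = C - q + k" using E(2) hk' by simp
      have "finite (inside n B)" "finite X"
        using finite_subset[OF inside_sub sm2_finite] finite_subset[OF Xc finite_subset[OF cross_sub[OF BBp(1)[OF B(1)]] sm2_finite]] by auto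
      moreover have "inside n B \<inter> X = {}" using inside_cross_disj Xc by blast
      ultimately have "card (inside n B \<union> X) = card (inside n B) + card X" by (rule card_Un_disjoint)
      then have "card E = card (inside n B) + card X" using EX by simp
      then have "card X = k" using cE cin[OF B(1)] by simp
      then have "(B, X) \<in> Dom n k BB" unfolding Dom_def using B(1) Xc by blast
      moreover have "E = \<Phi> (B, X)" unfolding \<Phi>_def using EX by simp
      ultimately show "E \<in> \<Phi> ` Dom n k BB" by blast
    qed
  qed
  have inj: "inj_on \<Phi> (Dom n k BB)"
  proof (rule inj_onI)
    fix p p' assume p: "p \<in> Dom n k BB" "p' \<in> Dom n k BB" "\<Phi> p = \<Phi> p'"
    obtain B X where BX: "p = (B, X)" "B \<in> BB" "X \<subseteq> cross n B" "card X = k" using p(1) unfolding Dom_def by auto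
    obtain B' X' where BX': "p' = (B', X')" "B' \<in> BB" "X' \<subseteq> cross n B'" "card X' = k" using p(2) unfolding Dom_def by auto
    define E where "E = inside n B \<union> X"
    have E': "E = inside n B' \<union> X'" using p(3) BX BX' unfolding E_def \<Phi>_def by simp
    have EB: "E \<inter> cross n B = X" unfolding E_def using BX(3) inside_cross_disj by blast
    have "card (E \<inter> cross n B) < s" using EB BX(4) ks unfolding s_def by simp
    then have "B' = B \<or> B' = {1..n} - B"
      using uniq_part[OF BBp(1)[OF BX(2)] BBp(1)[OF BX'(2)] BBp(2)[OF BX(2)] BBp(2)[OF BX'(2)] sn] E' by blast
    then have "B' = B" using sep BX(2) BX'(2) by blast
    moreover have "E \<inter> cross n B' = X'" unfolding E' using BX'(3) inside_cross_disj by blast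
    ultimately show "p = p'" using EB BX BX' by simp
  qed
  have finBB: "finite BB" using BBsub finite_subset[of BB "Pow {1..n}"] by auto
  have "card (Dom n k BB) = (\<Sum>B\<in>BB. card {X. X \<subseteq> cross n B \<and> card X = k})"
    unfolding Dom_def
  proof (rule card_SigmaI[OF finBB], rule ballI)
    fix B assume "B \<in> BB"
    have "finite (cross n B)" using finite_subset[OF cross_sub[OF BBp(1)] sm2_finite] \<open>B \<in> BB\<close> by blast
    then show "finite {X. X \<subseteq> cross n B \<and> card X = k}" by simp
  qed
  also have "\<dots> = (\<Sum>B\<in>BB. q choose k)"
  proof (rule sum.cong[OF refl])
    fix B assume "B \<in> BB"
    have "finite (cross n B)" using finite_subset[OF cross_sub[OF BBp(1)] sm2_finite] \<open>B \<in> BB\<close> by blast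
    then have "card {X. X \<subseteq> cross n B \<and> card X = k} = card (cross n B) choose k" by (rule n_subsets)
    then show "card {X. X \<subseteq> cross n B \<and> card X = k} = q choose k"
      using card_cross[OF BBp(1)[OF \<open>B \<in> BB\<close>]] BBp(2)[OF \<open>B \<in> BB\<close>] unfolding q_def by simp
  qed
  finally have "card (Dom n k BB) = card BB * (q choose k)" by simp
  then show ?thesis using card_image[OF inj] img unfolding q_def s_def by simp
qed



lemma two_C: "2 * card (sm n 2) = n * (n - 1)"
proof -
  have "even (n * (n - 1))" by (cases "even n") auto
  then show ?thesis unfolding card_sm2 choose_two by simp
qed

lemma good_empty:
  assumes "n mod 4 = 2 \<or> n mod 4 = 3" shows "Good n = {}"
proof (rule ccontr)
  assume "Good n \<noteq> {}"
  then obtain E where E: "E \<subseteq> sm n 2" "card E = card (sm n 2 - E)" unfolding Good_def by blast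
  have "card (sm n 2 - E) = card (sm n 2) - card E"
    using card_Diff_subset[OF finite_subset[OF E(1) sm2_finite] E(1)] .
  moreover have "card E \<le> card (sm n 2)" using card_mono[OF sm2_finite E(1)] .
  ultimately have "2 * card (sm n 2) = 4 * card E" using E(2) by simp
  then have eq: "n * (n - 1) = 4 * card E" using two_C by simp
  obtain j where "n = 4 * j + 2 \<or> n = 4 * j + 3" using assms by (metis div_mod_decomp mult.commute)
  then have "\<exists>X. n * (n - 1) = 4 * X + 2"
  proof
    assume n: "n = 4 * j + 2"
    have "n * (n - 1) = 4 * (4 * j * j + 3 * j) + 2" unfolding n by (simp add: algebra_simps)
    then show ?thesis by blast
  next
    assume n: "n = 4 * j + 3"
    have "n * (n - 1) = 4 * (4 * j * j + 5 * j + 1) + 2" unfolding n by (simp add: algebra_simps)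
    then show ?thesis by blast
  qed
  then obtain X where "n * (n - 1) = 4 * X + 2" by blast
  then show False using eq by presburger
qed

lemma count_4k:
  assumes k: "0 < k"
  shows "card (U (4 * k)) = ((4 * k - 1) choose (2 * k - 1)) * ((4 * k ^ 2) choose k)"
proof -
  define n where "n = 4 * k"
  have n4: "4 \<le> n" using k unfolding n_def by simp
  have d: "n div 2 = 2 * k" "n - n div 2 = 2 * k" unfolding n_def by auto
  have q: "n div 2 * (n - n div 2) = 4 * k ^ 2" using d by (simp add: power2_eq_square)
  have C2: "2 * card (sm n 2) = n * (n - 1)" by (rule two_C)
  have C: "card (sm n 2) = 8 * (k * k) - 2 * k"
  proof -
    have "n * (n - 1) = 16 * (k * k) - 4 * k" unfolding n_def by (simp add: algebra_simps diff_mult_distrib2)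
    then show ?thesis using C2 by simp
  qed
  have kk: "k \<le> k * k" using k by simp
  have hk: "card (sm n 2) = 2 * (card (sm n 2) - n div 2 * (n - n div 2) + k)"
    unfolding C q using kk by (simp add: power2_eq_square)
  define BB where "BB = {B. B \<subseteq> {1..n} \<and> card B = n div 2 \<and> 1 \<in> B}"
  have cnt: "card (Good n) = card BB * ((n div 2 * (n - n div 2)) choose k)"
  proof (rule count_generic[OF n4 hk])
    show "k < n div 2" using d k by simp
    show "BB \<subseteq> {B. B \<subseteq> {1..n} \<and> card B = n div 2}" unfolding BB_def by blast
    fix B
    show "B \<subseteq> {1..n} \<Longrightarrow> card B = n div 2 \<Longrightarrow> B \<in> BB \<or> {1..n} - B \<in> BB"
    proof -
      assume B: "B \<subseteq> {1..n}" "card B = n div 2"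
      have "finite B" using B finite_subset by blast
      then have "card ({1..n} - B) = n div 2" using card_Diff_subset[OF _ B(1)] B d by simp
      moreover have "1 \<in> {1..n}" using n4 by simp
      ultimately show ?thesis unfolding BB_def using B by auto
    qed
    show "B \<in> BB \<Longrightarrow> {1..n} - B \<notin> BB" unfolding BB_def by blast
  qed
  have cBB: "card BB = (n - 1) choose (n div 2 - 1)"
  proof -
    have inj: "inj_on (\<lambda>B. B - {1}) BB" unfolding BB_def inj_on_def by blast
    have img: "(\<lambda>B. B - {1}) ` BB = {T. T \<subseteq> {2..n} \<and> card T = n div 2 - 1}"
    proof
      show "(\<lambda>B. B - {1}) ` BB \<subseteq> {T. T \<subseteq> {2..n} \<and> card T = n div 2 - 1}"
      proof
        fix T assume "T \<in> (\<lambda>B. B - {1}) ` BB"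
        then obtain B where B: "B \<subseteq> {1..n}" "card B = n div 2" "1 \<in> B" "T = B - {1}" unfolding BB_def by blast
        have "finite B" using B finite_subset by blast
        then have "card T = n div 2 - 1" using B by simp
        moreover have "T \<subseteq> {2..n}" using B by auto
        ultimately show "T \<in> {T. T \<subseteq> {2..n} \<and> card T = n div 2 - 1}" by blast
      qed
      show "{T. T \<subseteq> {2..n} \<and> card T = n div 2 - 1} \<subseteq> (\<lambda>B. B - {1}) ` BB"
      proof
        fix T assume T: "T \<in> {T. T \<subseteq> {2..n} \<and> card T = n div 2 - 1}"
        have fT: "finite T" using T finite_subset by blast
        have "1 \<notin> T" using T by auto
        then have "card (insert 1 T) = n div 2" using fT T d k by simp
        moreover have "insert 1 T \<subseteq> {1..n}" using T n4 by auto
        ultimately have "insert 1 T \<in> BB" unfolding BB_def by blast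
        moreover have "T = insert 1 T - {1}" using \<open>1 \<notin> T\<close> by simp
        ultimately show "T \<in> (\<lambda>B. B - {1}) ` BB" by blast
      qed
    qed
    have "card BB = card {T. T \<subseteq> {2..n} \<and> card T = n div 2 - 1}" using card_image[OF inj] img by simp
    also have "\<dots> = card {2..n} choose (n div 2 - 1)" by (rule n_subsets) simp
    finally show ?thesis by simp
  qed
  have "card (U n) = card (Good n)" using card_U[OF n4] .
  then show ?thesis using cnt cBB q d unfolding n_def by simp
qed

lemma count_4k1:
  assumes k: "0 < k"
  shows "card (U (4 * k + 1)) = ((4 * k + 1) choose (2 * k)) * ((4 * k ^ 2 + 2 * k) choose k)"
proof -
  define n where "n = 4 * k + 1"
  have n4: "4 \<le> n" using k unfolding n_def by simp
  have d: "n div 2 = 2 * k" "n - n div 2 = 2 * k + 1" unfolding n_def by auto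
  have q: "n div 2 * (n - n div 2) = 4 * k ^ 2 + 2 * k" using d by (simp add: power2_eq_square algebra_simps)
  have C2: "2 * card (sm n 2) = n * (n - 1)" by (rule two_C)
  have C: "card (sm n 2) = 8 * (k * k) + 2 * k"
  proof -
    have "n * (n - 1) = 16 * (k * k) + 4 * k" unfolding n_def by (simp add: algebra_simps)
    then show ?thesis using C2 by simp
  qed
  have hk: "card (sm n 2) = 2 * (card (sm n 2) - n div 2 * (n - n div 2) + k)"
    unfolding C q by (simp add: power2_eq_square)
  define BB where "BB = {B. B \<subseteq> {1..n} \<and> card B = n div 2}"
  have cnt: "card (Good n) = card BB * ((n div 2 * (n - n div 2)) choose k)"
  proof (rule count_generic[OF n4 hk])
    show "k < n div 2" using d k by simp
    show "BB \<subseteq> {B. B \<subseteq> {1..n} \<and> card B = n div 2}" unfolding BB_def by blast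
    fix B
    show "B \<subseteq> {1..n} \<Longrightarrow> card B = n div 2 \<Longrightarrow> B \<in> BB \<or> {1..n} - B \<in> BB"
      unfolding BB_def by blast
    show "B \<in> BB \<Longrightarrow> {1..n} - B \<notin> BB"
    proof
      assume B: "B \<in> BB" "{1..n} - B \<in> BB"
      have B1: "B \<subseteq> {1..n}" "card B = 2 * k" using B d unfolding BB_def by auto
      have "finite B" using B1 finite_subset by blast
      then have "card ({1..n} - B) = n - 2 * k" using card_Diff_subset[OF _ B1(1)] B1 by simp
      then have "card ({1..n} - B) = 2 * k + 1" using d by simp
      then show False using B d unfolding BB_def by simp
    qed
  qed
  have cBB: "card BB = n choose (n div 2)" unfolding BB_def by (rule trans[OF n_subsets]) simp_all
  have "card (U n) = card (Good n)" using card_U[OF n4] .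
  then show ?thesis using cnt cBB q d unfolding n_def by (simp add: add.commute)
qed



lemma binom_half: assumes "0 < k" shows "(4 * k) choose (2 * k) = 2 * ((4 * k - 1) choose (2 * k - 1))"
proof -
  have "Suc (2 * k - 1) * (Suc (4 * k - 1) choose Suc (2 * k - 1)) = Suc (4 * k - 1) * ((4 * k - 1) choose (2 * k - 1))"
    by (rule Suc_times_binomial)
  moreover have "Suc (2 * k - 1) = 2 * k" "Suc (4 * k - 1) = 4 * k" using assms by auto
  ultimately have "2 * k * ((4 * k) choose (2 * k)) = 2 * k * (2 * ((4 * k - 1) choose (2 * k - 1)))" by simp
  then show ?thesis using assms by simp
qed

theorem proposition4p1:
  fixes n k :: nat
  assumes "n \<ge> 4" and "k > 0"
  shows "(n = 4 * k \<longrightarrow>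
            real (card (U n)) = 1 / 2 * real ((4 * k) choose (2 * k)) * real ((4 * k ^ 2) choose k))
       \<and> (n = 4 * k + 1 \<longrightarrow>
            card (U n) = ((4 * k + 1) choose (2 * k)) * ((4 * k ^ 2 + 2 * k) choose k))
       \<and> ((\<nexists>j. n = 4 * j \<or> n = 4 * j + 1) \<longrightarrow> card (U n) = 0)"
proof (intro conjI impI)
  assume n: "n = 4 * k"
  have "card (U n) = ((4 * k - 1) choose (2 * k - 1)) * ((4 * k ^ 2) choose k)"
    unfolding n using count_4k[OF assms(2)] .
  then show "real (card (U n)) = 1 / 2 * real ((4 * k) choose (2 * k)) * real ((4 * k ^ 2) choose k)"
    unfolding binom_half[OF assms(2)] by simp
next
  assume n: "n = 4 * k + 1"
  show "card (U n) = ((4 * k + 1) choose (2 * k)) * ((4 * k ^ 2 + 2 * k) choose k)"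
    unfolding n using count_4k1[OF assms(2)] .
next
  assume h: "\<nexists>j. n = 4 * j \<or> n = 4 * j + 1"
  have "n mod 4 = 2 \<or> n mod 4 = 3"
  proof (rule ccontr)
    assume "\<not> (n mod 4 = 2 \<or> n mod 4 = 3)"
    then have "n mod 4 = 0 \<or> n mod 4 = 1" by arith
    then have "n = 4 * (n div 4) \<or> n = 4 * (n div 4) + 1" by arith
    then show False using h by blast
  qed
  then have "Good n = {}" by (rule good_empty)
  then show "card (U n) = 0" using card_U[OF assms(1)] by simp
qed


end
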